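(* Let $q\ge 8$ be a power of two and $\Omega=\{0,1,\ldots,q-1\}$. Let $\sigma_1$ be the identity permutation, $\sigma_1(i)=i$, and let $\sigma_2(i) = (5i+2) \bmod q$ for $0\le i<q$. Then $\sigma_2$ is a permutation of $\Omega$ and $(\sigma_1,\sigma_2)$ is a nice pair of permutations.
   Context: For a permutation $\sigma$ of a $q$-element set $\Omega$ and $0 \le i < q$, $\sigma(i)$ denotes the element in position $i$. Given two permutations $\sigma_1,\sigma_2$ of $\Omega$, form the $2\times q$ array whose first row is $\sigma_1(0),\ldots,\sigma_1(q-1)$ and whose second row is $\sigma_2(0),\ldots,\sigma_2(q-1)$. Each $a\in\Omega$ occurs once in each row. If $a=\sigma_1(i)$, its first-row neighbors are $l_1=\sigma_1(i-1 \bmod q)$, $r_1=\sigma_1(i+1 \bmod q)$ and the down-neighbor $d=\sigma_2(i)$. If $a=\sigma_2(j)$, its second-row neighbors are $l_2=\sigma_2(j-1\bmod q)$, $r_2=\sigma_2(j+1 \bmod q)$ and the up-neighbor $u=\sigma_1(j)$. The pair $(\sigma_1,\sigma_2)$ is called a nice pair if for every $a\in\Omega$ the six elements $l_1,r_1,d,l_2,r_2,u$ are pairwise distinct. *)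

theory Defs
  imports Main
begin

text \<open>A permutation of the q-element set Omega = {0..<q}, written as a sequence:
  position i (0 \<le> i < q) holds element sigma i.\<close>
definition is_perm :: "nat \<Rightarrow> (nat \<Rightarrow> nat) \<Rightarrow> bool" where
  "is_perm q \<sigma> \<longleftrightarrow> bij_betw \<sigma> {0..<q} {0..<q}"

definition nice_pair :: "nat \<Rightarrow> (nat \<Rightarrow> nat) \<Rightarrow> (nat \<Rightarrow> nat) \<Rightarrow> bool" where
  "nice_pair q \<sigma>1 \<sigma>2 \<longleftrightarrow>
     is_perm q \<sigma>1 \<and> is_perm q \<sigma>2 \<and>
     (\<forall>a\<in>{0..<q}. \<forall>i<q. \<forall>j<q. \<sigma>1 i = a \<longrightarrow> \<sigma>2 j = a \<longrightarrow>
        distinct [\<sigma>1 ((i + q - 1) mod q), \<sigma>1 ((i + 1) mod q), \<sigma>2 i,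
                  \<sigma>2 ((j + q - 1) mod q), \<sigma>2 ((j + 1) mod q), \<sigma>1 j])"

end

theory Submission
  imports Defs "HOL-Number_Theory.Cong"
begin

lemma L1: "((c::nat)*j+d) mod 8 = (c*(j mod 8)+d) mod 8"
  by (metis mod_add_left_eq mod_mult_right_eq)
lemma L2: "((a::nat) + d) mod 8 = (a mod 8 + d) mod 8"
  by (metis mod_add_left_eq)
lemma H: "(r::nat) < 8 \<Longrightarrow> distinct [(5*r+9) mod 8, (5*r+3) mod 8, (25*r+12) mod (8::nat), (5*r+5) mod 8, (5*r+7) mod 8, r]"
proof -
  assume "r < 8"
  hence "r = 0 \<or> r = 1 \<or> r = 2 \<or> r = 3 \<or> r = 4 \<or> r = 5 \<or> r = 6 \<or> r = 7" by arith
  thus ?thesis by (elim disjE) simp_all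
qed

theorem mainTheorem3:
  fixes q k :: nat
  assumes "q = 2 ^ k" and "q \<ge> 8"
  defines "\<sigma>1 \<equiv> (\<lambda>i::nat. i)"
      and "\<sigma>2 \<equiv> (\<lambda>i::nat. (5 * i + 2) mod q)"
  shows "is_perm q \<sigma>2 \<and> nice_pair q \<sigma>1 \<sigma>2"
proof -
  have k3: "k \<ge> 3"
  proof (rule ccontr)
    assume "\<not> k \<ge> 3"
    hence "k \<le> 2" by simp
    hence "(2::nat)^k \<le> 2^2" by (rule power_increasing) simp
    thus False using assms(1,2) by simp
  qed
  have d8: "8 dvd q"
  proof -
    have "(2::nat)^3 dvd 2^k" using k3 by (rule le_imp_power_dvd)
    thus ?thesis using assms(1) by simp
  qed
  then obtain t where qt: "q = 8 * t" by auto
  have key: "\<And>x. x mod q mod 8 = x mod 8" using d8 by (simp add: mod_mod_cancel)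
  have q8: "q mod 8 = 0" using d8 by simp
  have inj: "inj_on \<sigma>2 {0..<q}"
  proof (rule inj_onI)
    fix x y assume xy: "x \<in> {0..<q}" "y \<in> {0..<q}" "\<sigma>2 x = \<sigma>2 y"
    hence "[5 * x + 2 = 5 * y + 2] (mod q)" by (simp add: \<sigma>2_def cong_def)
    hence c: "[5 * x = 5 * y] (mod q)" using cong_add_rcancel_nat by blast
    have "coprime 5 q"
    proof -
      have "coprime (5::nat) (2^k)" by (simp add: coprime_power_right_iff) 
      thus ?thesis using assms(1) by simp
    qed
    hence "[x = y] (mod q)" using c by (simp add: cong_mult_lcancel_nat)
    thus "x = y" using xy by (simp add: cong_def)
  qed
  have img: "\<sigma>2 ` {0..<q} \<subseteq> {0..<q}" using assms(2) by (auto simp: \<sigma>2_def)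
  have perm2: "is_perm q \<sigma>2"
    unfolding is_perm_def bij_betw_def using inj endo_inj_surj[OF _ img inj] by simp
  have perm1: "is_perm q \<sigma>1" unfolding is_perm_def \<sigma>1_def by (simp add: bij_betw_def)
  have main: "distinct [\<sigma>1 ((i + q - 1) mod q), \<sigma>1 ((i + 1) mod q), \<sigma>2 i,
                  \<sigma>2 ((j + q - 1) mod q), \<sigma>2 ((j + 1) mod q), \<sigma>1 j]"
    if "i < q" "j < q" "\<sigma>1 i = a" "\<sigma>2 j = a" for a i j
  proof -
    have ja: "a mod 8 = (5*j+2) mod 8" using that(4) key[of "5*j+2"] by (simp add: \<sigma>2_def)
    have ia: "i = a" using that by (simp add: \<sigma>1_def)
    have jj: "j mod q = j" using that by simp
    have f1: "((a + q - 1) mod q) mod 8 = (a + q - 1) mod 8" by (rule key)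
    have f2: "((a + 1) mod q) mod 8 = (a + 1) mod 8" by (rule key)
    have f3: "((5*a+2) mod q) mod 8 = (5*a+2) mod 8" by (rule key)
    have g: "\<And>y. ((5 * (y mod q) + 2) mod q) mod 8 = (5*y+2) mod 8"
    proof -
      fix y
      have "((5 * (y mod q) + 2) mod q) mod 8 = (5 * (y mod q) + 2) mod 8" by (rule key)
      also have "\<dots> = (5 * (y mod q mod 8) + 2) mod 8" by (metis mod_add_left_eq mod_mult_right_eq)
      also have "\<dots> = (5 * (y mod 8) + 2) mod 8" by (simp add: key)
      also have "\<dots> = (5*y+2) mod 8" by (metis mod_add_left_eq mod_mult_right_eq)
      finally show "((5 * (y mod q) + 2) mod q) mod 8 = (5*y+2) mod 8" .
    qed
    note f4 = g[of "j + q - 1"]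
    note f5 = g[of "j + 1"]
    have f6: "j mod 8 = j mod 8" ..
    have t1: "t \<ge> 1" using qt assms(2) by simp
    have e1: "a + q - 1 = (a + 7) + 8*(t-1)" using qt t1 by simp
    have e4: "j + q - 1 = (j + 7) + 8*(t-1)" using qt t1 by simp
    have a8: "a mod 8 = (5*(j mod 8)+2) mod 8" using ja L1[of 5 j 2] by simp
    have r1: "((a + q - 1) mod q) mod 8 = (5*(j mod 8)+9) mod 8"
    proof -
      have "((a + q - 1) mod q) mod 8 = (a + 7) mod 8" using f1 e1 by simp
      also have "\<dots> = (a mod 8 + 7) mod 8" by (rule L2)
      also have "\<dots> = ((5*(j mod 8)+2) mod 8 + 7) mod 8" using a8 by simp
      also have "\<dots> = (5*(j mod 8)+9) mod 8" using mod_add_left_eq[of "5*(j mod 8)+2" 8 7] by (simp add: ac_simps)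
      finally show ?thesis .
    qed
    have r2: "((a + 1) mod q) mod 8 = (5*(j mod 8)+3) mod 8"
    proof -
      have "((a + 1) mod q) mod 8 = (a mod 8 + 1) mod 8" using f2 L2[of a 1] by simp
      also have "\<dots> = ((5*(j mod 8)+2) mod 8 + 1) mod 8" using a8 by simp
      also have "\<dots> = (5*(j mod 8)+3) mod 8" using mod_add_left_eq[of "5*(j mod 8)+2" 8 1] by (simp add: ac_simps)
      finally show ?thesis .
    qed
    have r3: "((5*a+2) mod q) mod 8 = (25*(j mod 8)+12) mod 8"
    proof -
      have "((5*a+2) mod q) mod 8 = (5*(a mod 8)+2) mod 8" using f3 L1[of 5 a 2] by simp
      also have "\<dots> = (5*((5*(j mod 8)+2) mod 8)+2) mod 8" using a8 by simp
      also have "\<dots> = (5*(5*(j mod 8)+2)+2) mod 8" using mod_mult_right_eq[of 5 "5*(j mod 8)+2" 8] mod_add_left_eq[of "5*((5*(j mod 8)+2))" 8 2] mod_add_left_eq[of "5*((5*(j mod 8)+2) mod 8)" 8 2] by (simp add: ac_simps)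
      also have "\<dots> = (25*(j mod 8)+12) mod 8" by (simp add: algebra_simps)
      finally show ?thesis .
    qed
    have r4: "((5 * ((j + q - 1) mod q) + 2) mod q) mod 8 = (5*(j mod 8) + 5) mod 8"
    proof -
      have ee: "5*(j+q-1)+2 = (5*j+37) + 8*(5*(t-1))" using e4 by simp
      have "((5 * ((j + q - 1) mod q) + 2) mod q) mod 8 = (5*j+37) mod 8"
        unfolding f4 ee by (rule mod_mult_self2)
      also have "\<dots> = (5*(j mod 8)+37) mod 8" by (rule L1)
      also have "\<dots> = (5*(j mod 8)+5) mod 8" using mod_mult_self1[of "5*(j mod 8)+5" 4 8] by (simp add: algebra_simps)
      finally show ?thesis .
    qed
    have r5: "((5 * ((j + 1) mod q) + 2) mod q) mod 8 = (5*(j mod 8) + 7) mod 8"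
    proof -
      have "((5 * ((j + 1) mod q) + 2) mod q) mod 8 = (5*j + 7) mod 8" using f5
        by (simp add: algebra_simps)
      also have "\<dots> = (5*(j mod 8)+7) mod 8" by (rule L1)
      finally show ?thesis .
    qed
    have r6: "j mod 8 = j mod 8" ..
    have "distinct (map (\<lambda>x. x mod 8) [\<sigma>1 ((i + q - 1) mod q), \<sigma>1 ((i + 1) mod q), \<sigma>2 i,
                  \<sigma>2 ((j + q - 1) mod q), \<sigma>2 ((j + 1) mod q), \<sigma>1 j])"
      unfolding \<sigma>1_def \<sigma>2_def ia list.map r1 r2 r3 r4 r5
      using H[of "j mod 8"] by simp
    thus ?thesis using distinct_map by blast
  qed
  show ?thesis using perm1 perm2 main unfolding nice_pair_def by blast
qed

end
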